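(* Under the assumptions of Theorem 1 (with $\varepsilon>0$), let $(u,v)$ be a classical solution on $[0,T)$ with $u>0$, and set $\tilde u=u-\alpha$, $\tilde v=v-\beta$ with $\beta(x,t)=[\beta_2(t)-\beta_1(t)]x+\beta_1(t)$. Then there exists $C>0$ independent of $t$ and $T$ such that for all $t\in[0,T)$ \[ \|\tilde u(t)\|^2+\|\tilde v(t)\|^2+\int_0^t\|\tilde u_x(\tau)\|^2\,d\tau\le C . \]
   Context: Setting of Theorem 1: $\varepsilon>0$; on $(0,1)\times(0,\infty)$, $u_t-(uv)_x=u_{xx}$, $v_t-u_x=\varepsilon v_{xx}+\varepsilon(v^2)_x$, $(u,v)(x,0)=(u_0,v_0)(x)$, $u(0,t)=u(1,t)=\alpha(t)$, $v(0,t)=\beta_1(t)$, $v(1,t)=\beta_2(t)$; $u_0>0$, $(u_0,v_0)\in[H^2((0,1))]^2$ compatible with the boundary data; $\alpha,\beta_1,\beta_2$ smooth on $[0,\infty)$ with $\alpha\ge\underline\alpha>0$, $\alpha'\in W^{1,1}(\mathbb{R}_+)$, $\beta_1-\beta_2\in L^1(\mathbb{R}_+)$, $\beta_1',\beta_2'\in W^{1,1}(\mathbb{R}_+)$. $\|\cdot\|$ is the $L^2((0,1))$ norm. *)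

theory Defs imports "HOL-Analysis.Analysis" begin

definition smooth_derivs :: "real set \<Rightarrow> (real \<Rightarrow> real) \<Rightarrow> (nat \<Rightarrow> real \<Rightarrow> real) \<Rightarrow> bool" where
  "smooth_derivs S f D \<longleftrightarrow> (\<forall>t\<in>S. D 0 t = f t) \<and>
     (\<forall>k. \<forall>t\<in>S. (D k has_real_derivative D (Suc k) t) (at t within S))"

text \<open>Sobolev space H^2((0,1)) in one dimension: f = a + b x + double primitive of an L^2 function.\<close>
definition H2_01 :: "(real \<Rightarrow> real) \<Rightarrow> bool" where
  "H2_01 f \<longleftrightarrow> (\<exists>a b g. g \<in> borel_measurable lborel \<and>
      set_integrable lborel {0..1} (\<lambda>x. (g x)^2) \<and>
      (\<forall>x\<in>{0..1}. f x = a + b * x +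
         (LINT y:{0..x}|lborel. (LINT z:{0..y}|lborel. g z))))"

definition classical_sol ::
  "real \<Rightarrow> (real \<Rightarrow> real) \<Rightarrow> (real \<Rightarrow> real) \<Rightarrow> (real \<Rightarrow> real) \<Rightarrow> (real \<Rightarrow> real) \<Rightarrow> (real \<Rightarrow> real)
   \<Rightarrow> real \<Rightarrow> (real \<Rightarrow> real \<Rightarrow> real) \<Rightarrow> (real \<Rightarrow> real \<Rightarrow> real) \<Rightarrow> bool" where
  "classical_sol \<epsilon> u0 v0 \<alpha> \<beta>1 \<beta>2 T u v \<longleftrightarrow>
   (\<exists>ux vx uxx vxx ut vt.
     continuous_on ({0..1} \<times> {0..<T}) (\<lambda>(x,t). u x t) \<and>
     continuous_on ({0..1} \<times> {0..<T}) (\<lambda>(x,t). v x t) \<and>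
     continuous_on ({0..1} \<times> {0..<T}) (\<lambda>(x,t). ux x t) \<and>
     continuous_on ({0..1} \<times> {0..<T}) (\<lambda>(x,t). vx x t) \<and>
     continuous_on ({0..1} \<times> {0<..<T}) (\<lambda>(x,t). uxx x t) \<and>
     continuous_on ({0..1} \<times> {0<..<T}) (\<lambda>(x,t). vxx x t) \<and>
     continuous_on ({0..1} \<times> {0<..<T}) (\<lambda>(x,t). ut x t) \<and>
     continuous_on ({0..1} \<times> {0<..<T}) (\<lambda>(x,t). vt x t) \<and>
     (\<forall>x\<in>{0..1}. \<forall>t\<in>{0..<T}.
        ((\<lambda>y. u y t) has_real_derivative ux x t) (at x within {0..1}) \<and>
        ((\<lambda>y. v y t) has_real_derivative vx x t) (at x within {0..1})) \<and>
     (\<forall>x\<in>{0..1}. \<forall>t\<in>{0<..<T}.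
        ((\<lambda>y. ux y t) has_real_derivative uxx x t) (at x within {0..1}) \<and>
        ((\<lambda>y. vx y t) has_real_derivative vxx x t) (at x within {0..1}) \<and>
        ((\<lambda>s. u x s) has_real_derivative ut x t) (at t) \<and>
        ((\<lambda>s. v x s) has_real_derivative vt x t) (at t)) \<and>
     (\<forall>x\<in>{0<..<1}. \<forall>t\<in>{0<..<T}.
        ut x t - (ux x t * v x t + u x t * vx x t) = uxx x t \<and>
        vt x t - ux x t = \<epsilon> * vxx x t + \<epsilon> * (2 * v x t * vx x t)) \<and>
     (\<forall>x\<in>{0..1}. u x 0 = u0 x \<and> v x 0 = v0 x) \<and>
     (\<forall>t\<in>{0..<T}. u 0 t = \<alpha> t \<and> u 1 t = \<alpha> t \<and> v 0 t = \<beta>1 t \<and> v 1 t = \<beta>2 t))"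

end

theory Submission imports Defs begin

lemma cont_slice:
  assumes "continuous_on (S \<times> {0..1::real}) F" "t \<in> S"
  shows "continuous_on {0..1} (\<lambda>x. F (t,x))"
  by (rule continuous_on_compose2[OF assms(1)]) (auto intro!: continuous_intros simp: assms(2))

lemma cont_swap:
  assumes "continuous_on ({0..1::real} \<times> S) (\<lambda>(x,t). f x t)" "S' \<subseteq> S"
  shows "continuous_on (S' \<times> {0..1}) (\<lambda>p. f (snd p) (fst p))"
proof -
  have "continuous_on (S' \<times> {0..1}) (\<lambda>p. (\<lambda>(x,t). f x t) (snd p, fst p))"
    by (rule continuous_on_compose2[OF assms(1)]) (use assms(2) in \<open>auto intro!: continuous_intros\<close>)
  then show ?thesis by simp
qed

lemma gronwall:
  fixes F h :: "real \<Rightarrow> real"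
  assumes b: "0 \<le> b" and cF: "continuous_on {0..b} F" and ch: "continuous_on {0..b} h"
    and dF: "\<And>t. 0<t \<Longrightarrow> t<b \<Longrightarrow> \<exists>d. (F has_real_derivative d) (at t) \<and> d \<le> h t * (F t + 1)"
  shows "F b + 1 \<le> (F 0 + 1) * exp (integral {0..b} h)"
proof -
  define H where "H s = integral {0..s} h" for s
  define W where "W s = (F s + 1) * exp (- H s)" for s
  have cH: "continuous_on {0..b} H"
    unfolding H_def by (rule indefinite_integral_continuous_1[OF integrable_continuous_interval[OF ch]])
  have cW: "continuous_on {0..b} W" unfolding W_def
    by (intro continuous_intros cF cH)
  have "W b \<le> W 0"
  proof (rule DERIV_nonpos_imp_decreasing_open[OF b _ cW])
    fix t assume t: "0 < t" "t < b"
    obtain d where d: "(F has_real_derivative d) (at t)" "d \<le> h t * (F t + 1)" using dF[OF t] by blast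
    have "(H has_real_derivative h t) (at t within {0..b})"
      unfolding H_def by (rule integral_has_real_derivative[OF ch]) (use t in auto)
    moreover have "at t within {0..b} = at t" by (rule at_within_interior) (use t in auto)
    ultimately have dH: "(H has_real_derivative h t) (at t)" by simp
    have "(W has_real_derivative (d * exp (- H t) + (F t + 1) * (exp (- H t) * (- h t)))) (at t)"
      unfolding W_def by (auto intro!: derivative_eq_intros d(1) dH)
    moreover have "d * exp (- H t) + (F t + 1) * (exp (- H t) * (- h t)) \<le> 0"
    proof -
      have "d * exp (- H t) + (F t + 1) * (exp (- H t) * (- h t)) = exp (- H t) * (d - h t * (F t + 1))"
        by (simp add: algebra_simps)
      also have "\<dots> \<le> 0" using d(2) by (intro mult_nonneg_nonpos) auto
      finally show ?thesis .
    qed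
    ultimately show "\<exists>y. (W has_real_derivative y) (at t) \<and> y \<le> 0" by blast
  qed
  moreover have "H 0 = 0" unfolding H_def by simp
  ultimately have "(F b + 1) * exp (- H b) \<le> F 0 + 1" unfolding W_def by simp
  then have i: "(F b + 1) * exp (- H b) * exp (H b) \<le> (F 0 + 1) * exp (H b)"
    by (rule mult_right_mono) auto
  have e1: "exp (- H b) * exp (H b) = 1" by (simp add: exp_minus)
  have e: "(F b + 1) * exp (- H b) * exp (H b) = F b + 1"
    by (simp only: mult.assoc e1) simp
  from i e have "F b + 1 \<le> (F 0 + 1) * exp (H b)" by linarith
  then show ?thesis by (simp only: H_def)
qed

lemma cs_bound:
  fixes f :: "real \<Rightarrow> real"
  assumes cf: "continuous_on {0..1} f" and x: "0 \<le> x" "x \<le> 1"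
  shows "(integral {0..x} f)^2 \<le> integral {0..1} (\<lambda>y. (f y)^2)"
proof -
  define c where "c = integral {0..x} f"
  have cfx: "continuous_on {0..x} f" using x by (intro continuous_on_subset[OF cf]) auto
  have i1: "f integrable_on {0..x}" by (rule integrable_continuous_interval[OF cfx])
  have i2: "(\<lambda>y. (f y)^2) integrable_on {0..x}"
    by (rule integrable_continuous_interval) (intro continuous_intros cfx)
  have "0 \<le> integral {0..x} (\<lambda>y. (f y - c)^2)"
    by (rule integral_nonneg) (auto intro!: integrable_continuous_interval continuous_intros cfx)
  also have "integral {0..x} (\<lambda>y. (f y - c)^2) = integral {0..x} (\<lambda>y. (f y)^2 - 2*c * f y + c^2)"
    by (simp add: power2_diff algebra_simps)
  also have "\<dots> = integral {0..x} (\<lambda>y. (f y)^2) - 2*c*c + c^2 * x"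
  proof -
    have i3: "(\<lambda>y. 2*c * f y) integrable_on {0..x}" by (intro integrable_continuous_interval continuous_intros cfx)
    have "integral {0..x} (\<lambda>y. (f y)^2 - 2*c * f y + c^2) = integral {0..x} (\<lambda>y. (f y)^2 - 2*c * f y) + integral {0..x} (\<lambda>y. c^2)"
      by (rule integral_add) (auto intro: integrable_diff i2 i3)
    also have "integral {0..x} (\<lambda>y. (f y)^2 - 2*c * f y) = integral {0..x} (\<lambda>y. (f y)^2) - integral {0..x} (\<lambda>y. 2*c * f y)"
      by (rule integral_diff[OF i2 i3])
    also have "integral {0..x} (\<lambda>y. 2*c * f y) = 2*c*c" unfolding c_def by simp
    finally show ?thesis using x by simp
  qed
  finally have "c^2 * (2 - x) \<le> integral {0..x} (\<lambda>y. (f y)^2)" by (simp add: power2_eq_square algebra_simps)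
  moreover have "c^2 \<le> c^2 * (2 - x)" using x by (simp add: mult_le_cancel_left1)
  moreover have "integral {0..x} (\<lambda>y. (f y)^2) \<le> integral {0..1} (\<lambda>y. (f y)^2)"
    by (rule integral_subset_le) (use x i2 in \<open>auto intro!: integrable_continuous_interval continuous_intros cf\<close>)
  ultimately show ?thesis unfolding c_def by linarith
qed

lemma entropy_nonneg:
  fixes u a :: real assumes "u > 0" "a > 0"
  shows "0 \<le> u * ln (u / a) - u + a"
proof -
  have "ln (a/u) \<le> a/u - 1" by (rule ln_le_minus_one) (use assms in auto)
  moreover have "ln (a/u) = - ln (u/a)" using assms by (simp add: ln_div)
  ultimately have "- ln (u/a) \<le> a/u - 1" by simp
  then have "u * (- ln (u/a)) \<le> u * (a/u - 1)" using assms by (intro mult_left_mono) auto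
  then show ?thesis using assms by (simp add: algebra_simps)
qed

lemma entropy_lin:
  fixes u a :: real assumes "u > 0" "a > 0"
  shows "u \<le> (u * ln (u / a) - u + a) + 9 * a"
proof (cases "u \<ge> 9 * a")
  case True
  have "exp (2::real) \<le> 9"
  proof -
    have "exp (2::real) = exp 1 * exp 1" by (simp flip: exp_add)
    also have "\<dots> \<le> 3 * 3" using exp_le by (intro mult_mono) auto
    finally show ?thesis by simp
  qed
  also have "9 \<le> u / a" using True assms by (simp add: field_simps)
  finally have "2 \<le> ln (u/a)" using assms by (simp add: ln_ge_iff)
  then have "u * 2 \<le> u * ln (u/a)" using assms by (intro mult_left_mono) auto
  then show ?thesis using assms by linarith
next
  case False
  then show ?thesis using entropy_nonneg[OF assms] assms by linarith
qed

lemma L1_bound: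
  fixes f :: "real \<Rightarrow> real"
  assumes cf: "continuous_on {0..} f" and si: "set_integrable lborel {0..} f" and t: "0 \<le> t"
  shows "integral {0..t} (\<lambda>s. \<bar>f s\<bar>) \<le> (LINT s:{0..}|lborel. \<bar>f s\<bar>)"
proof -
  have sa: "set_integrable lborel {0..} (\<lambda>s. \<bar>f s\<bar>)" by (rule set_integrable_abs[OF si])
  have st: "set_integrable lborel {0..t} (\<lambda>s. \<bar>f s\<bar>)"
    by (rule set_integrable_subset[OF sa]) auto
  have "integral {0..t} (\<lambda>s. \<bar>f s\<bar>) = (LINT s:{0..t}|lborel. \<bar>f s\<bar>)"
    using set_borel_integral_eq_integral(2)[OF st] by simp
  also have "\<dots> \<le> (LINT s:{0..}|lborel. \<bar>f s\<bar>)"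
    using st sa unfolding set_lebesgue_integral_def set_integrable_def
    by (intro integral_mono) (auto simp: indicator_def)
  finally show ?thesis .
qed

lemma absV: "\<bar>V::real\<bar> \<le> V^2/2 + 1/2"
proof -
  have "0 \<le> (\<bar>V\<bar> - 1)^2" by simp
  then show ?thesis by (simp add: power2_eq_square algebra_simps abs_mult_self_eq)
qed

lemma conv_abs:
  fixes x p q :: real assumes "0 \<le> x" "x \<le> 1"
  shows "\<bar>(1 - x) * p + x * q\<bar> \<le> (1 - x) * \<bar>p\<bar> + x * \<bar>q\<bar>"
proof -
  have "\<bar>(1 - x) * p + x * q\<bar> \<le> \<bar>(1 - x) * p\<bar> + \<bar>x * q\<bar>" by (rule abs_triangle_ineq)
  also have "\<dots> = (1 - x) * \<bar>p\<bar> + x * \<bar>q\<bar>" using assms by (simp add: abs_mult)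
  finally show ?thesis .
qed

lemma R1_bound:
  fixes uu U V Vx ux alpha al' bx bt btt Phi g eps a B c1 :: real
  assumes u: "uu > 0" and a: "a > 0" "a \<le> alpha" and U: "\<bar>U\<bar> \<le> c1*(Phi+1)" and Phi: "Phi \<ge> 0"
    and eps: "eps > 0" and bt: "\<bar>bt\<bar> \<le> B" and bx: "\<bar>bx\<bar> \<le> g" and al': "\<bar>al'\<bar> \<le> g"
    and btt: "\<bar>btt\<bar> \<le> g" and c1: "c1 \<ge> 0" and B: "B \<ge> 0"
  shows "- (ux^2)/uu - eps*Vx^2 - al'*U/alpha + bx*U + eps*bx*V^2 + 2*eps*bt*bx*V - btt*V
     \<le> -eps*Vx^2 + (c1/a + c1 + 2*eps + 2*eps*B + 1) * g * ((Phi + V^2/2) + 1)"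
proof -
  define W where "W = Phi + V^2/2 + 1"
  have W1: "W \<ge> 1" using Phi unfolding W_def by simp
  have g0: "g \<ge> 0" using bx by linarith
  have "c1*(Phi+1) \<le> c1*W" using c1 unfolding W_def by (intro mult_left_mono) auto
  then have UW: "\<bar>U\<bar> \<le> c1 * W" using U by linarith
  have VW: "\<bar>V\<bar> \<le> W" using absV[of V] Phi unfolding W_def by linarith
  have p1: "- (ux^2)/uu \<le> 0" using u by simp
  have q2: "\<bar>al'\<bar> * \<bar>U\<bar> \<le> g * (c1 * W)" by (rule mult_mono[OF al' UW]) (use g0 in auto)
  have "\<bar>al'*U/alpha\<bar> = \<bar>al'\<bar> * \<bar>U\<bar> / alpha" using a by (simp add: abs_mult)
  also have "\<dots> \<le> g * (c1 * W) / alpha" using q2 a by (intro divide_right_mono) auto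
  also have "\<dots> \<le> g * (c1 * W) / a" using a g0 c1 W1 by (intro divide_left_mono) auto
  finally have "- (al'*U/alpha) \<le> g * (c1 * W) / a" by (rule abs_le_D2)
  moreover have "g * (c1 * W) / a = c1/a * g * W" by simp
  ultimately have p2: "- al'*U/alpha \<le> c1/a * g * W" by simp
  have "\<bar>bx*U\<bar> \<le> g * (c1 * W)" unfolding abs_mult by (rule mult_mono[OF bx UW]) (use g0 in auto)
  then have p3: "bx*U \<le> c1 * g * W" by (simp add: algebra_simps)
  have "eps*bx*V^2 \<le> eps * g * V^2" using bx eps by (intro mult_right_mono mult_left_mono) auto
  also have "\<dots> \<le> eps * g * (2*W)" using eps g0 Phi unfolding W_def by (intro mult_left_mono) auto
  finally have p4: "eps*bx*V^2 \<le> 2*eps*g*W" by simp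
  have "\<bar>bt*bx*V\<bar> \<le> B * g * W" unfolding abs_mult
    by (intro mult_mono bt bx VW) (use B g0 in auto)
  then have "bt*bx*V \<le> B*g*W" by linarith
  then have "2*eps*(bt*bx*V) \<le> 2*eps*(B*g*W)" by (rule mult_left_mono) (use eps in auto)
  then have p5: "2*eps*bt*bx*V \<le> 2*eps*B*g*W" by (simp add: mult.assoc)
  have "\<bar>btt*V\<bar> \<le> g * W" unfolding abs_mult by (intro mult_mono btt VW) (use g0 in auto)
  then have p6: "- btt*V \<le> g*W" by linarith
  have "(c1/a + c1 + 2*eps + 2*eps*B + 1) * g * W = c1/a*g*W + c1*g*W + 2*eps*g*W + 2*eps*B*g*W + g*W"
    by (simp add: algebra_simps)
  then show ?thesis using p1 p2 p3 p4 p5 p6 unfolding W_def by (simp add: algebra_simps)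
qed

lemma R2_bound:
  fixes uu U V ux alpha al' bx g M A :: real
  assumes uU: "uu = U + alpha" and al: "0 \<le> alpha" "alpha \<le> A"
    and V: "V^2 \<le> M" and bx: "\<bar>bx\<bar> \<le> g" and al': "\<bar>al'\<bar> \<le> g" and A: "A \<ge> 0"
  shows "- (ux^2) - ux*uu*V + bx*(U^2/2 + alpha*U) - al'*U
     \<le> -(1/2)*ux^2 + (4 + A + A^2) * (M + g) * (U^2/2 + 1)"
proof -
  define W where "W = U^2/2 + 1"
  have W1: "W \<ge> 1" unfolding W_def by simp
  have g0: "g \<ge> 0" using bx by linarith
  have M0: "M \<ge> 0" using V zero_le_power2[of V] by linarith
  have UW: "\<bar>U\<bar> \<le> W" using absV[of U] unfolding W_def by linarith
  have "- ux*uu*V \<le> ux^2/2 + uu^2*V^2/2"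
  proof -
    have "0 \<le> (ux + uu*V)^2/2" by simp
    then show ?thesis by (simp add: power2_eq_square algebra_simps)
  qed
  moreover have "uu^2 \<le> 2*U^2 + 2*A^2"
  proof -
    have "0 \<le> (U - alpha)^2" by simp
    then have "uu^2 \<le> 2*U^2 + 2*alpha^2" using uU by (simp add: power2_eq_square algebra_simps)
    moreover have "alpha^2 \<le> A^2" using al by (intro power_mono) auto
    ultimately show ?thesis by linarith
  qed
  moreover have "uu^2*V^2/2 \<le> (2*U^2 + 2*A^2)*V^2/2"
    using calculation(2) by (intro divide_right_mono mult_right_mono) auto
  ultimately have q00: "- ux*uu*V \<le> ux^2/2 + (2*U^2 + 2*A^2)*V^2/2" by linarith
  have "(2*U^2 + 2*A^2)*V^2/2 \<le> (2*U^2 + 2*A^2)*M/2"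
    by (intro divide_right_mono mult_left_mono V) auto
  with q00 have q0: "- ux*uu*V \<le> ux^2/2 + (2*U^2 + 2*A^2)*M/2" by linarith
  have "(2*U^2 + 2*A^2)*M/2 = (U^2 + A^2)*M" by (simp add: field_simps)
  with q0 have q1: "- ux*uu*V \<le> ux^2/2 + (U^2 + A^2)*M" by linarith
  have "(U^2 + A^2)*M \<le> (2 + A^2) * M * W"
  proof -
    have e: "(2 + A^2)*W = U^2 + A^2 + (2 + A^2*U^2/2)" by (simp add: W_def algebra_simps)
    have "0 \<le> A^2*U^2" by simp
    then have "U^2 + A^2 \<le> (2 + A^2) * W" using e by linarith
    then have "(U^2 + A^2)*M \<le> ((2 + A^2) * W)*M" using M0 by (rule mult_right_mono)
    then show ?thesis by (simp add: algebra_simps)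
  qed
  with q1 have q1': "- ux*uu*V \<le> ux^2/2 + (2 + A^2) * M * W" by linarith
  have "\<bar>bx*(U^2/2 + alpha*U)\<bar> \<le> g * (W + A*W)"
  proof -
    have "\<bar>U^2/2 + alpha*U\<bar> \<le> U^2/2 + alpha*\<bar>U\<bar>" 
    proof -
      have "\<bar>U^2/2 + alpha*U\<bar> \<le> \<bar>U^2/2\<bar> + \<bar>alpha*U\<bar>" by (rule abs_triangle_ineq)
      also have "\<dots> = U^2/2 + alpha*\<bar>U\<bar>" using al by (simp add: abs_mult)
      finally show ?thesis .
    qed
    also have "\<dots> \<le> W + A*W" using UW al W1 unfolding W_def by (intro add_mono mult_mono) auto
    finally show ?thesis unfolding abs_mult by (intro mult_mono bx) (use g0 in auto)
  qed
  then have q2: "bx*(U^2/2 + alpha*U) \<le> (1 + A) * g * W" by (simp add: algebra_simps)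
  have "\<bar>al'*U\<bar> \<le> g * W" unfolding abs_mult by (intro mult_mono al' UW) (use g0 in auto)
  then have q3: "- al'*U \<le> g * W" by linarith
  have "(4 + A + A^2) * (M + g) * W \<ge> (2 + A^2) * M * W + (1 + A) * g * W + g * W"
  proof -
    have "(4 + A + A^2) * (M + g) * W = (2 + A^2) * M * W + (1 + A) * g * W + g * W + ((2 + A) * M * W + 2 * g * W + A^2 * g * W)"
      by (simp add: algebra_simps)
    moreover have "0 \<le> (2 + A) * M * W + 2 * g * W + A^2 * g * W" using M0 g0 W1 A by simp
    ultimately show ?thesis by linarith
  qed
  then show ?thesis using q1' q2 q3 unfolding W_def by linarith
qed

lemma id1:
  fixes u v ux vx uxx vxx al al' b1 b2 b1' b2' x e L :: real
  assumes u: "u \<noteq> 0"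
  shows "(uxx + (ux * v + u * vx)) * L - al' * (u - al) / al
    + (v - ((b2 - b1) * x + b1)) * ((ux + e * vxx + e * (2 * v * vx)) - ((b2' - b1') * x + b1'))
  = ((ux * v + u * vx + uxx) * L
  + (u * v + ux) * ux / u - (b2 - b1) * (u - al) - ((b2 - b1) * x + b1) * ux
  + e * (vx - (b2 - b1)) * vx + e * (v - ((b2 - b1) * x + b1)) * vxx - e * (b2 - b1) * (vx - (b2 - b1))
  + 2*e*(v - ((b2 - b1) * x + b1))^2 * (vx - (b2 - b1)) + e * (b2 - b1) * (v - ((b2 - b1) * x + b1))^2
  + 2*e*((b2 - b1) * x + b1)*(v - ((b2 - b1) * x + b1))*(vx - (b2 - b1)))
  + (- (ux^2)/u - e*(vx - (b2 - b1))^2 - al'*(u - al)/al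
     + (b2 - b1)*(u - al) + e*(b2 - b1)*(v - ((b2 - b1) * x + b1))^2 + 2*e*((b2 - b1) * x + b1)*(b2 - b1)*(v - ((b2 - b1) * x + b1))
     - ((b2' - b1') * x + b1')*(v - ((b2 - b1) * x + b1)))"
proof -
  have d1: "(u * v + ux) * ux / u = v * ux + ux^2/u" using u by (simp add: field_simps power2_eq_square)
  show ?thesis unfolding d1 by (simp add: algebra_simps power2_eq_square)
qed

lemma int_le_open:
  fixes f g :: "real \<Rightarrow> real"
  assumes "f integrable_on {0..1}" "g integrable_on {0..1}" "\<And>x. 0 < x \<Longrightarrow> x < 1 \<Longrightarrow> f x \<le> g x"
  shows "integral {0..1} f \<le> integral {0..1} g"
proof -
  have "integral {0<..<1} f \<le> integral {0<..<1} g"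
    using assms by (intro integral_le) (auto simp: integrable_on_Icc_iff_Ioo[symmetric])
  then show ?thesis by (simp add: integral_open_interval_real[symmetric])
qed

lemma cont_fst0:
  assumes "continuous_on {0..} f" "S \<subseteq> {0..} \<times> UNIV"
  shows "continuous_on S (\<lambda>p. f (fst p :: real))"
  by (rule continuous_on_compose2[OF assms(1) continuous_on_fst]) (use assms(2) in auto)

locale sol =
  fixes \<epsilon> T :: real and u v ux vx uxx vxx ut vt :: "real \<Rightarrow> real \<Rightarrow> real"
    and \<alpha> \<beta>1 \<beta>2 \<alpha>' \<beta>1' \<beta>2' g :: "real \<Rightarrow> real" and a A B Lg :: real
  assumes eps: "\<epsilon> > 0" and Tpos: "T > 0"
  and cu: "continuous_on ({0..1} \<times> {0..<T}) (\<lambda>(x,t). u x t)"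
  and cv: "continuous_on ({0..1} \<times> {0..<T}) (\<lambda>(x,t). v x t)"
  and cux: "continuous_on ({0..1} \<times> {0..<T}) (\<lambda>(x,t). ux x t)"
  and cvx: "continuous_on ({0..1} \<times> {0..<T}) (\<lambda>(x,t). vx x t)"
  and cuxx: "continuous_on ({0..1} \<times> {0<..<T}) (\<lambda>(x,t). uxx x t)"
  and cvxx: "continuous_on ({0..1} \<times> {0<..<T}) (\<lambda>(x,t). vxx x t)"
  and cut: "continuous_on ({0..1} \<times> {0<..<T}) (\<lambda>(x,t). ut x t)"
  and cvt: "continuous_on ({0..1} \<times> {0<..<T}) (\<lambda>(x,t). vt x t)"
  and dux: "\<And>x t. x \<in> {0..1} \<Longrightarrow> t \<in> {0..<T} \<Longrightarrow> ((\<lambda>y. u y t) has_real_derivative ux x t) (at x within {0..1})"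
  and dvx: "\<And>x t. x \<in> {0..1} \<Longrightarrow> t \<in> {0..<T} \<Longrightarrow> ((\<lambda>y. v y t) has_real_derivative vx x t) (at x within {0..1})"
  and duxx: "\<And>x t. x \<in> {0..1} \<Longrightarrow> t \<in> {0<..<T} \<Longrightarrow> ((\<lambda>y. ux y t) has_real_derivative uxx x t) (at x within {0..1})"
  and dvxx: "\<And>x t. x \<in> {0..1} \<Longrightarrow> t \<in> {0<..<T} \<Longrightarrow> ((\<lambda>y. vx y t) has_real_derivative vxx x t) (at x within {0..1})"
  and dut: "\<And>x t. x \<in> {0..1} \<Longrightarrow> t \<in> {0<..<T} \<Longrightarrow> ((\<lambda>s. u x s) has_real_derivative ut x t) (at t)"
  and dvt: "\<And>x t. x \<in> {0..1} \<Longrightarrow> t \<in> {0<..<T} \<Longrightarrow> ((\<lambda>s. v x s) has_real_derivative vt x t) (at t)"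
  and pde1: "\<And>x t. x \<in> {0<..<1} \<Longrightarrow> t \<in> {0<..<T} \<Longrightarrow> ut x t - (ux x t * v x t + u x t * vx x t) = uxx x t"
  and pde2: "\<And>x t. x \<in> {0<..<1} \<Longrightarrow> t \<in> {0<..<T} \<Longrightarrow> vt x t - ux x t = \<epsilon> * vxx x t + \<epsilon> * (2 * v x t * vx x t)"
  and bd: "\<And>t. t \<in> {0..<T} \<Longrightarrow> u 0 t = \<alpha> t \<and> u 1 t = \<alpha> t \<and> v 0 t = \<beta>1 t \<and> v 1 t = \<beta>2 t"
  and upos: "\<And>x t. x \<in> {0..1} \<Longrightarrow> t \<in> {0..<T} \<Longrightarrow> u x t > 0"
  and d\<alpha>: "\<And>t. t > 0 \<Longrightarrow> (\<alpha> has_real_derivative \<alpha>' t) (at t)"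
  and d\<beta>1: "\<And>t. t > 0 \<Longrightarrow> (\<beta>1 has_real_derivative \<beta>1' t) (at t)"
  and d\<beta>2: "\<And>t. t > 0 \<Longrightarrow> (\<beta>2 has_real_derivative \<beta>2' t) (at t)"
  and c\<alpha>: "continuous_on {0..} \<alpha>" and c\<alpha>': "continuous_on {0..} \<alpha>'"
  and c\<beta>1: "continuous_on {0..} \<beta>1" and c\<beta>1': "continuous_on {0..} \<beta>1'"
  and c\<beta>2: "continuous_on {0..} \<beta>2" and c\<beta>2': "continuous_on {0..} \<beta>2'"
  and apos: "a > 0" and alow: "\<And>t. t \<ge> 0 \<Longrightarrow> a \<le> \<alpha> t" and aup: "\<And>t. t \<ge> 0 \<Longrightarrow> \<alpha> t \<le> A"
  and b1b: "\<And>t. t \<ge> 0 \<Longrightarrow> \<bar>\<beta>1 t\<bar> \<le> B" and b2b: "\<And>t. t \<ge> 0 \<Longrightarrow> \<bar>\<beta>2 t\<bar> \<le> B"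
  and g_eq: "\<And>t. g t = \<bar>\<alpha>' t\<bar> + \<bar>\<beta>1 t - \<beta>2 t\<bar> + \<bar>\<beta>1' t\<bar> + \<bar>\<beta>2' t\<bar>"
  and gint: "\<And>t. t \<ge> 0 \<Longrightarrow> integral {0..t} g \<le> Lg"
begin

abbreviation "S0 \<equiv> {0..<T} \<times> {0..1::real}"
abbreviation "S1 \<equiv> {0<..<T} \<times> {0..1::real}"

lemma S1S0: "S1 \<subseteq> S0" by auto

lemmas c0 = cu[THEN cont_swap, OF order_refl] cv[THEN cont_swap, OF order_refl]
  cux[THEN cont_swap, OF order_refl] cvx[THEN cont_swap, OF order_refl]

lemma c0': "continuous_on S1 (\<lambda>p. u (snd p) (fst p))" "continuous_on S1 (\<lambda>p. v (snd p) (fst p))"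
  "continuous_on S1 (\<lambda>p. ux (snd p) (fst p))" "continuous_on S1 (\<lambda>p. vx (snd p) (fst p))"
  using c0 by (auto intro: continuous_on_subset[OF _ S1S0])

lemmas c1 = cuxx[THEN cont_swap, OF order_refl] cvxx[THEN cont_swap, OF order_refl]
  cut[THEN cont_swap, OF order_refl] cvt[THEN cont_swap, OF order_refl]

lemma ctime0:
  "continuous_on S0 (\<lambda>p. \<alpha> (fst p))" "continuous_on S0 (\<lambda>p. \<alpha>' (fst p))"
  "continuous_on S0 (\<lambda>p. \<beta>1 (fst p))" "continuous_on S0 (\<lambda>p. \<beta>1' (fst p))"
  "continuous_on S0 (\<lambda>p. \<beta>2 (fst p))" "continuous_on S0 (\<lambda>p. \<beta>2' (fst p))"
  by (auto intro!: cont_fst0 c\<alpha> c\<alpha>' c\<beta>1 c\<beta>1' c\<beta>2 c\<beta>2')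

lemma ctime1:
  "continuous_on S1 (\<lambda>p. \<alpha> (fst p))" "continuous_on S1 (\<lambda>p. \<alpha>' (fst p))"
  "continuous_on S1 (\<lambda>p. \<beta>1 (fst p))" "continuous_on S1 (\<lambda>p. \<beta>1' (fst p))"
  "continuous_on S1 (\<lambda>p. \<beta>2 (fst p))" "continuous_on S1 (\<lambda>p. \<beta>2' (fst p))"
  by (auto intro!: cont_fst0 c\<alpha> c\<alpha>' c\<beta>1 c\<beta>1' c\<beta>2 c\<beta>2')

lemmas cc[continuous_intros] = c0 c0' c1 ctime0 ctime1

lemma apos': "t \<ge> 0 \<Longrightarrow> \<alpha> t > 0" using alow apos by force

definition "bt t x = (\<beta>2 t - \<beta>1 t) * x + \<beta>1 t"
definition "bx t = \<beta>2 t - \<beta>1 t"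
definition "btt t x = (\<beta>2' t - \<beta>1' t) * x + \<beta>1' t"
definition "Phi x t = u x t * ln (u x t / \<alpha> t) - u x t + \<alpha> t"
definition "e1 x t = Phi x t + (v x t - bt t x)^2 / 2"
definition "P1 x t = ut x t * ln (u x t / \<alpha> t) - \<alpha>' t * (u x t - \<alpha> t) / \<alpha> t
    + (v x t - bt t x) * (vt x t - btt t x)"
definition "E1 t = integral {0..1} (\<lambda>x. e1 x t)"

lemma e1_deriv:
  assumes x: "x \<in> {0..1}" and t: "t \<in> {0<..<T}"
  shows "((\<lambda>s. e1 x s) has_real_derivative P1 x t) (at t)"
proof -
  have u: "u x t > 0" using upos x t by auto
  have al: "\<alpha> t > 0" using apos' t by auto
  have dl: "((\<lambda>s. ln (u x s / \<alpha> s)) has_real_derivative (ut x t / u x t - \<alpha>' t / \<alpha> t)) (at t)"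
    by (rule derivative_eq_intros dut[OF x t] d\<alpha> refl | use t u al in \<open>simp add: field_simps power2_eq_square\<close>)+
  show ?thesis unfolding e1_def Phi_def bt_def P1_def btt_def
    by (rule derivative_eq_intros dut[OF x t] dvt[OF x t] d\<alpha> d\<beta>1 d\<beta>2 dl refl | use t u al in \<open>simp add: field_simps power2_eq_square\<close>)+
qed

lemma ln_nz: "\<forall>p\<in>S0. u (snd p) (fst p) / \<alpha> (fst p) \<noteq> 0" "\<forall>p\<in>S1. u (snd p) (fst p) / \<alpha> (fst p) \<noteq> 0"
  "\<forall>p\<in>S0. u (snd p) (fst p) \<noteq> 0" "\<forall>p\<in>S1. u (snd p) (fst p) \<noteq> 0"
  "\<forall>p\<in>S0. \<alpha> (fst p) \<noteq> 0" "\<forall>p\<in>S1. \<alpha> (fst p) \<noteq> 0"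
  using upos apos' by (fastforce intro!: divide_pos_pos less_imp_neq[symmetric])+

lemma cont_P1: "continuous_on S1 (\<lambda>p. P1 (snd p) (fst p))"
  unfolding P1_def bt_def btt_def by (auto intro!: continuous_intros ln_nz)

lemma cont_e1: "continuous_on S0 (\<lambda>p. e1 (snd p) (fst p))"
  unfolding e1_def Phi_def bt_def by (auto intro!: continuous_intros ln_nz)

lemma slice0: "continuous_on S0 F \<Longrightarrow> t \<in> {0..<T} \<Longrightarrow> continuous_on {0..1} (\<lambda>x. F (t,x))"
  by (rule cont_slice)
lemma slice1: "continuous_on S1 F \<Longrightarrow> t \<in> {0<..<T} \<Longrightarrow> continuous_on {0..1} (\<lambda>x. F (t,x))"
  by (rule cont_slice)

lemma leib:
  assumes "\<And>x s. x \<in> {0..1} \<Longrightarrow> s \<in> {0<..<T} \<Longrightarrow> ((\<lambda>s. f x s) has_real_derivative fd x s) (at s)"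
    and "continuous_on S0 (\<lambda>p. f (snd p) (fst p))"
    and "continuous_on S1 (\<lambda>p. fd (snd p) (fst p))"
    and t: "t \<in> {0<..<T}"
  shows "((\<lambda>s. integral {0..1} (\<lambda>x. f x s)) has_real_derivative integral {0..1} (\<lambda>x. fd x t)) (at t)"
proof -
  have "((\<lambda>s. integral (cbox 0 1) (\<lambda>x. f x s)) has_field_derivative integral (cbox 0 1) (\<lambda>x. fd x t)) (at t within {0<..<T})"
  proof (rule leibniz_rule_field_derivative[where f="\<lambda>s x. f x s" and fx = "\<lambda>s x. fd x s"])
    fix s x assume "s \<in> {0<..<T}" "x \<in> cbox (0::real) 1"
    then show "((\<lambda>s. f x s) has_field_derivative fd x s) (at s within {0<..<T})"
      using assms(1) by (auto intro: has_field_derivative_at_within)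
  next
    fix s assume s: "s \<in> {0<..<T}"
    have "continuous_on {0..1} (\<lambda>x. (\<lambda>p. f (snd p) (fst p)) (s,x))"
      by (rule slice0[OF assms(2)]) (use s in auto)
    then show "(\<lambda>x. f x s) integrable_on cbox 0 1" by (auto intro: integrable_continuous_interval)
  next
    show "continuous_on ({0<..<T} \<times> cbox 0 1) (\<lambda>(s, x). fd x s)"
      using assms(3) by (simp add: case_prod_beta')
  qed (use t in auto)
  moreover have "at t within {0<..<T} = at t" by (rule at_within_open) (use t in auto)
  ultimately show ?thesis by simp
qed

lemma E1_deriv: "t \<in> {0<..<T} \<Longrightarrow> (E1 has_real_derivative integral {0..1} (\<lambda>x. P1 x t)) (at t)"
  unfolding E1_def by (rule leib[OF e1_deriv cont_e1 cont_P1])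

lemma int_deriv:
  assumes "x \<in> {0<..<1}" "((\<lambda>y. f y) has_real_derivative d) (at x within {0..1})"
  shows "((\<lambda>y. f y) has_real_derivative d) (at x)"
proof -
  have "at x within {0..1} = at x" by (rule at_within_interior) (use assms(1) in auto)
  with assms(2) show ?thesis by simp
qed

lemma dxi:
  assumes x: "x \<in> {0<..<1}" and t: "t \<in> {0<..<T}"
  shows "((\<lambda>y. u y t) has_real_derivative ux x t) (at x)" "((\<lambda>y. v y t) has_real_derivative vx x t) (at x)"
    "((\<lambda>y. ux y t) has_real_derivative uxx x t) (at x)" "((\<lambda>y. vx y t) has_real_derivative vxx x t) (at x)"
  using x t by (auto intro!: int_deriv[OF x] dux dvx duxx dvxx)

definition "Q1 x t = (u x t * v x t + ux x t) * ln (u x t / \<alpha> t) - bt t x * (u x t - \<alpha> t)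
  + \<epsilon> * (v x t - bt t x) * vx x t - \<epsilon> * bx t * (v x t - bt t x) + (2*\<epsilon>/3) * (v x t - bt t x)^3
  + \<epsilon> * bt t x * (v x t - bt t x)^2"
definition "Qd1 x t = (ux x t * v x t + u x t * vx x t + uxx x t) * ln (u x t / \<alpha> t)
  + (u x t * v x t + ux x t) * ux x t / u x t - bx t * (u x t - \<alpha> t) - bt t x * ux x t
  + \<epsilon> * (vx x t - bx t) * vx x t + \<epsilon> * (v x t - bt t x) * vxx x t - \<epsilon> * bx t * (vx x t - bx t)
  + 2*\<epsilon>*(v x t - bt t x)^2 * (vx x t - bx t) + \<epsilon> * bx t * (v x t - bt t x)^2
  + 2*\<epsilon>*bt t x*(v x t - bt t x)*(vx x t - bx t)"

lemma Q1_deriv: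
  assumes x: "x \<in> {0<..<1}" and t: "t \<in> {0<..<T}"
  shows "((\<lambda>y. Q1 y t) has_real_derivative Qd1 x t) (at x)"
proof -
  have u: "u x t > 0" using upos x t by auto
  have al: "\<alpha> t > 0" using apos' t by auto
  have dl: "((\<lambda>y. ln (u y t / \<alpha> t)) has_real_derivative (ux x t / u x t)) (at x)"
    by (rule derivative_eq_intros dxi[OF x t] refl | use t u al in \<open>simp add: field_simps power2_eq_square\<close>)+
  have db: "((\<lambda>y. bt t y) has_real_derivative bx t) (at x)" unfolding bt_def bx_def
    by (rule derivative_eq_intros refl | simp)+
  show ?thesis unfolding Q1_def Qd1_def
    by (rule derivative_eq_intros dxi[OF x t] dl db refl | use t u al in \<open>simp add: field_simps power2_eq_square power3_eq_cube\<close>)+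
qed

lemma B0: "B \<ge> 0" using b1b[of 0] by simp
lemma A0: "A > 0" using aup[of 0] apos' [of 0] by simp

lemma bt_bound: "t \<ge> 0 \<Longrightarrow> x \<in> {0..1} \<Longrightarrow> \<bar>bt t x\<bar> \<le> B"
proof -
  assume t: "t \<ge> 0" and x: "x \<in> {0..1}"
  have "bt t x = (1 - x) * \<beta>1 t + x * \<beta>2 t" unfolding bt_def by (simp add: algebra_simps)
  also have "\<bar>\<dots>\<bar> \<le> (1 - x) * \<bar>\<beta>1 t\<bar> + x * \<bar>\<beta>2 t\<bar>"
    using x by (intro conv_abs) auto
  also have "\<dots> \<le> (1 - x) * B + x * B"
    using x b1b[OF t] b2b[OF t] by (intro add_mono mult_left_mono) auto
  finally show ?thesis by (simp add: algebra_simps)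
qed

lemma btt_bound: "x \<in> {0..1} \<Longrightarrow> \<bar>btt t x\<bar> \<le> g t"
proof -
  assume x: "x \<in> {0..1}"
  have "btt t x = (1 - x) * \<beta>1' t + x * \<beta>2' t" unfolding btt_def by (simp add: algebra_simps)
  also have "\<bar>\<dots>\<bar> \<le> (1 - x) * \<bar>\<beta>1' t\<bar> + x * \<bar>\<beta>2' t\<bar>"
    using x by (intro conv_abs) auto
  also have "\<dots> \<le> 1 * \<bar>\<beta>1' t\<bar> + 1 * \<bar>\<beta>2' t\<bar>"
    using x by (intro add_mono mult_right_mono) auto
  finally show ?thesis using g_eq[of t] abs_ge_zero[of "\<alpha>' t"] abs_ge_zero[of "\<beta>1 t - \<beta>2 t"] by linarith
qed

lemma bx_bound: "\<bar>bx t\<bar> \<le> g t" unfolding bx_def using g_eq[of t] by simp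
lemma a'_bound: "\<bar>\<alpha>' t\<bar> \<le> g t" using g_eq[of t] by simp
lemma g0: "g t \<ge> 0" using g_eq[of t] by simp

definition "c1 = 1 + 10 * A"
definition "K1 = c1/a + c1 + 2*\<epsilon> + 2*\<epsilon>*B + 1"

lemma K1_pos: "K1 \<ge> 0" using A0 apos eps B0 unfolding K1_def c1_def by simp

lemma U_bound:
  assumes x: "x \<in> {0..1}" and t: "t \<in> {0..<T}"
  shows "\<bar>u x t - \<alpha> t\<bar> \<le> c1 * (Phi x t + 1)" "Phi x t \<ge> 0"
proof -
  have u: "u x t > 0" using upos x t by auto
  have al: "\<alpha> t > 0" "\<alpha> t \<le> A" using apos' aup t by auto
  show P: "Phi x t \<ge> 0" unfolding Phi_def by (rule entropy_nonneg[OF u al(1)])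
  have "u x t \<le> Phi x t + 9 * \<alpha> t" unfolding Phi_def by (rule entropy_lin[OF u al(1)])
  then have "\<bar>u x t - \<alpha> t\<bar> \<le> Phi x t + 10 * A" using u al by linarith
  also have "\<dots> \<le> c1 * (Phi x t + 1)" unfolding c1_def using P A0
    by (simp add: algebra_simps)
  finally show "\<bar>u x t - \<alpha> t\<bar> \<le> c1 * (Phi x t + 1)" .
qed

lemma P1_le:
  assumes x: "x \<in> {0<..<1}" and t: "t \<in> {0<..<T}"
  shows "P1 x t \<le> Qd1 x t - \<epsilon> * (vx x t - bx t)^2 + K1 * g t * (e1 x t + 1)"
proof -
  have x': "x \<in> {0..1}" and t': "t \<in> {0..<T}" using x t by auto
  have u: "u x t > 0" using upos x' t' by auto
  have al: "\<alpha> t > 0" using apos' t by auto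
  define Rr where "Rr = - ((ux x t)^2)/u x t - \<epsilon>*(vx x t - bx t)^2 - \<alpha>' t*(u x t - \<alpha> t)/\<alpha> t
     + bx t*(u x t - \<alpha> t) + \<epsilon>*bx t*(v x t - bt t x)^2 + 2*\<epsilon>*bt t x*bx t*(v x t - bt t x)
     - btt t x*(v x t - bt t x)"
  have eq: "P1 x t = Qd1 x t + Rr"
  proof -
    have p1: "ut x t = uxx x t + (ux x t * v x t + u x t * vx x t)" using pde1[OF x t] by simp
    have p2: "vt x t = ux x t + \<epsilon> * vxx x t + \<epsilon> * (2 * v x t * vx x t)" using pde2[OF x t] by simp
    show ?thesis unfolding Rr_def P1_def Qd1_def p1 p2 bt_def bx_def btt_def
      by (rule id1) (use u in simp)
  qed
  have "Rr \<le> - \<epsilon>*(vx x t - bx t)^2 + K1 * g t * ((Phi x t + (v x t - bt t x)^2/2) + 1)"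
    unfolding K1_def Rr_def
    by (rule R1_bound[OF u apos alow U_bound[OF x' t'] eps bt_bound bx_bound a'_bound btt_bound])
       (use t x' A0 B0 in \<open>auto simp: c1_def\<close>)
  then have "Rr \<le> - \<epsilon>*(vx x t - bx t)^2 + K1 * g t * (e1 x t + 1)" by (simp only: e1_def)
  then show ?thesis unfolding eq by linarith
qed

lemma int_combo:
  fixes f1 f2 f3 :: "real \<Rightarrow> real"
  assumes "f1 integrable_on {0..1}" "f2 integrable_on {0..1}" "f3 integrable_on {0..1}"
  shows "integral {0..1} (\<lambda>x. f1 x - c * f2 x + d * (f3 x + 1)) = integral {0..1} f1 - c * integral {0..1} f2 + d * (integral {0..1} f3 + 1)"
proof -
  have i2: "(\<lambda>x. c * f2 x) integrable_on {0..1}" using assms(2) by (rule integrable_on_mult_right)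
  have i3: "(\<lambda>x. f3 x + 1) integrable_on {0..1}" using assms(3) by (intro integrable_add) auto
  have i3': "(\<lambda>x. d * (f3 x + 1)) integrable_on {0..1}" using i3 by (rule integrable_on_mult_right)
  have "integral {0..1} (\<lambda>x. f1 x - c * f2 x + d * (f3 x + 1)) = integral {0..1} (\<lambda>x. f1 x - c * f2 x) + integral {0..1} (\<lambda>x. d * (f3 x + 1))"
    by (rule integral_add) (use assms(1) i2 i3' in \<open>auto intro: integrable_diff\<close>)
  also have "integral {0..1} (\<lambda>x. f1 x - c * f2 x) = integral {0..1} f1 - c * integral {0..1} f2"
    using integral_diff[OF assms(1) i2] by simp
  also have "integral {0..1} (\<lambda>x. d * (f3 x + 1)) = d * (integral {0..1} f3 + 1)"
  proof -
    have one: "(\<lambda>x::real. 1::real) integrable_on {0..1}" by (rule integrable_continuous_interval) (rule continuous_on_const)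
    have "integral {0..1} (\<lambda>x. f3 x + 1) = integral {0..1} f3 + integral {0..1} (\<lambda>x::real. 1::real)"
      by (rule integral_add[OF assms(3) one])
    then have "integral {0..1} (\<lambda>x. f3 x + 1) = integral {0..1} f3 + 1" by simp
    then show ?thesis by simp
  qed
  finally show ?thesis .
qed

lemma param_cont:
  fixes f :: "real \<Rightarrow> real \<Rightarrow> real"
  assumes "continuous_on S0 (\<lambda>p. f (snd p) (fst p))"
  shows "continuous_on {0..<T} (\<lambda>t. integral {0..1} (\<lambda>x. f x t))"
proof -
  have "continuous_on {0..<T} (\<lambda>t. integral (cbox 0 1) (\<lambda>x. f x t))"
    by (rule integral_continuous_on_param[where f="\<lambda>t x. f x t" and U="{0..<T}"]) (use assms in \<open>simp add: case_prod_beta'\<close>)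
  then show ?thesis by simp
qed

lemma sl_int0: fixes f :: "real \<Rightarrow> real \<Rightarrow> real" shows "continuous_on S0 (\<lambda>p. f (snd p) (fst p)) \<Longrightarrow> t \<in> {0..<T} \<Longrightarrow> (\<lambda>x. f x t) integrable_on {0..1}"
  using slice0[of "\<lambda>p. f (snd p) (fst p)" t] by (auto intro: integrable_continuous_interval)
lemma sl_int1: fixes f :: "real \<Rightarrow> real \<Rightarrow> real" shows "continuous_on S1 (\<lambda>p. f (snd p) (fst p)) \<Longrightarrow> t \<in> {0<..<T} \<Longrightarrow> (\<lambda>x. f x t) integrable_on {0..1}"
  using slice1[of "\<lambda>p. f (snd p) (fst p)" t] by (auto intro: integrable_continuous_interval)

lemma cont_Q1: "continuous_on S1 (\<lambda>p. Q1 (snd p) (fst p))"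
  unfolding Q1_def bt_def bx_def by (auto intro!: continuous_intros ln_nz)
lemma cont_Qd1: "continuous_on S1 (\<lambda>p. Qd1 (snd p) (fst p))"
  unfolding Qd1_def bt_def bx_def by (auto intro!: continuous_intros ln_nz)
lemma cont_Vx: "continuous_on S0 (\<lambda>p. (vx (snd p) (fst p) - bx (fst p))^2)"
  unfolding bx_def by (auto intro!: continuous_intros)

lemma Qd1_int: assumes t: "t \<in> {0<..<T}" shows "integral {0..1} (\<lambda>x. Qd1 x t) = 0"
proof -
  have "((\<lambda>x. Qd1 x t) has_integral (Q1 1 t - Q1 0 t)) {0..1}"
  proof (rule fundamental_theorem_of_calculus_interior)
    show "continuous_on {0..1} (\<lambda>x. Q1 x t)" using slice1[OF cont_Q1 t] by simp
    fix x assume "x \<in> {0<..<1::real}"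
    then show "((\<lambda>x. Q1 x t) has_vector_derivative Qd1 x t) (at x)"
      using Q1_deriv[OF _ t] by (simp add: has_real_derivative_iff_has_vector_derivative)
  qed simp
  moreover have "Q1 1 t = 0" "Q1 0 t = 0" using bd[of t] t apos'[of t] unfolding Q1_def bt_def bx_def by auto
  ultimately show ?thesis by (simp add: integral_unique)
qed

definition "M t = integral {0..1} (\<lambda>x. (vx x t - bx t)^2)"
definition "F1 t = E1 t + \<epsilon> * integral {0..t} M"

lemma E1_dbound: assumes t: "t \<in> {0<..<T}"
  shows "integral {0..1} (\<lambda>x. P1 x t) \<le> - \<epsilon> * M t + K1 * g t * (E1 t + 1)"
proof -
  have t0: "t \<in> {0..<T}" using t by auto
  have iQ: "(\<lambda>x. Qd1 x t) integrable_on {0..1}" by (rule sl_int1[OF cont_Qd1 t])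
  have iV: "(\<lambda>x. (vx x t - bx t)^2) integrable_on {0..1}" by (rule sl_int0[OF cont_Vx t0])
  have ie: "(\<lambda>x. e1 x t) integrable_on {0..1}" by (rule sl_int0[OF cont_e1 t0])
  have "integral {0..1} (\<lambda>x. P1 x t) \<le> integral {0..1} (\<lambda>x. Qd1 x t - \<epsilon> * (vx x t - bx t)^2 + K1 * g t * (e1 x t + 1))"
  proof (rule int_le_open)
    show "(\<lambda>x. P1 x t) integrable_on {0..1}" by (rule sl_int1[OF cont_P1 t])
    show "(\<lambda>x. Qd1 x t - \<epsilon> * (vx x t - bx t)^2 + K1 * g t * (e1 x t + 1)) integrable_on {0..1}"
      using iQ iV ie by (intro integrable_add integrable_diff integrable_on_mult_right) auto
  qed (use P1_le t in auto)
  also have "\<dots> = - \<epsilon> * M t + K1 * g t * (E1 t + 1)"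
    unfolding int_combo[OF iQ iV ie] Qd1_int[OF t] M_def E1_def by simp
  finally show ?thesis .
qed

lemma g_cont: "continuous_on {0..} g"
proof -
  have "g = (\<lambda>t. \<bar>\<alpha>' t\<bar> + \<bar>\<beta>1 t - \<beta>2 t\<bar> + \<bar>\<beta>1' t\<bar> + \<bar>\<beta>2' t\<bar>)" by (rule ext) (rule g_eq)
  then show ?thesis by (auto intro!: continuous_intros c\<alpha>' c\<beta>1 c\<beta>2 c\<beta>1' c\<beta>2')
qed

lemma M_cont: "continuous_on {0..<T} M"
  unfolding M_def by (rule param_cont[OF cont_Vx])
lemma E1_cont: "continuous_on {0..<T} E1"
  unfolding E1_def by (rule param_cont[OF cont_e1])
lemma M_nonneg: "t \<in> {0..<T} \<Longrightarrow> M t \<ge> 0"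
  unfolding M_def by (rule integral_nonneg[OF sl_int0[OF cont_Vx]]) auto
lemma E1_nonneg: "t \<in> {0..<T} \<Longrightarrow> E1 t \<ge> 0"
  unfolding E1_def
proof (rule integral_nonneg[OF sl_int0[OF cont_e1]])
  fix x assume "t \<in> {0..<T}" "x \<in> {0..1::real}"
  then show "0 \<le> e1 x t" unfolding e1_def using U_bound(2)[of x t] by simp
qed auto

lemma intM_nonneg: "b \<in> {0..<T} \<Longrightarrow> integral {0..b} M \<ge> 0"
  by (rule integral_nonneg) (auto intro!: integrable_continuous_interval continuous_on_subset[OF M_cont] M_nonneg)

lemma lemma1:
  assumes b: "b \<in> {0..<T}"
  shows "F1 b + 1 \<le> (E1 0 + 1) * exp (K1 * Lg)"
proof -
  have cM: "continuous_on {0..b} M" using b by (intro continuous_on_subset[OF M_cont]) auto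
  have cE: "continuous_on {0..b} E1" using b by (intro continuous_on_subset[OF E1_cont]) auto
  have cF: "continuous_on {0..b} F1" unfolding F1_def
    by (intro continuous_intros cE indefinite_integral_continuous_1 integrable_continuous_interval cM)
  have ch: "continuous_on {0..b} (\<lambda>t. K1 * g t)" using b by (intro continuous_intros continuous_on_subset[OF g_cont]) auto
  have "F1 b + 1 \<le> (F1 0 + 1) * exp (integral {0..b} (\<lambda>t. K1 * g t))"
  proof (rule gronwall[OF _ cF ch])
    show "0 \<le> b" using b by auto
    fix t assume t: "0 < t" "t < b"
    have tT: "t \<in> {0<..<T}" using t b by auto
    have "(integral {0..b} M) \<ge> 0" by (rule intM_nonneg[OF b])
    have dI: "((\<lambda>s. integral {0..s} M) has_real_derivative M t) (at t)"
    proof -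
      have "((\<lambda>s. integral {0..s} M) has_real_derivative M t) (at t within {0..b})"
        by (rule integral_has_real_derivative[OF cM]) (use t in auto)
      moreover have "at t within {0..b} = at t" by (rule at_within_interior) (use t in auto)
      ultimately show ?thesis by simp
    qed
    have dF: "(F1 has_real_derivative (integral {0..1} (\<lambda>x. P1 x t) + \<epsilon> * M t)) (at t)"
    proof -
      have "F1 = (\<lambda>s. E1 s + \<epsilon> * integral {0..s} M)" by (rule ext) (simp add: F1_def)
      moreover have "((\<lambda>s. \<epsilon> * integral {0..s} M) has_real_derivative \<epsilon> * M t) (at t)"
        by (rule DERIV_cmult[OF dI])
      ultimately show ?thesis using DERIV_add[OF E1_deriv[OF tT]] by simp
    qed
    have "integral {0..1} (\<lambda>x. P1 x t) + \<epsilon> * M t \<le> K1 * g t * (E1 t + 1)"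
      using E1_dbound[OF tT] by simp
    also have "\<dots> \<le> K1 * g t * (F1 t + 1)"
    proof -
      have "E1 t \<le> F1 t" unfolding F1_def using intM_nonneg[of t] eps tT by simp
      then show ?thesis using K1_pos g0[of t] by (intro mult_left_mono) auto
    qed
    finally show "\<exists>d. (F1 has_real_derivative d) (at t) \<and> d \<le> K1 * g t * (F1 t + 1)" using dF by blast
  qed
  also have "\<dots> \<le> (E1 0 + 1) * exp (K1 * Lg)"
  proof -
    have "F1 0 = E1 0" unfolding F1_def by simp
    moreover have "integral {0..b} (\<lambda>t. K1 * g t) \<le> K1 * Lg"
      using gint[of b] b K1_pos by (simp add: mult_left_mono)
    moreover have "E1 0 + 1 \<ge> 0" using E1_nonneg[of 0] Tpos by simp
    ultimately show ?thesis by (simp add: mult_left_mono)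
  qed
  finally show ?thesis .
qed

lemma V_sup:
  assumes x: "x \<in> {0..1}" and t: "t \<in> {0..<T}"
  shows "(v x t - bt t x)^2 \<le> M t"
proof -
  have db: "\<And>y. ((\<lambda>y. bt t y) has_real_derivative bx t) (at y within {0..1})"
    unfolding bt_def bx_def by (rule derivative_eq_intros refl | simp)+
  have "((\<lambda>y. vx y t - bx t) has_integral ((v x t - bt t x) - (v 0 t - bt t 0))) {0..x}"
  proof (rule fundamental_theorem_of_calculus)
    show "0 \<le> x" using x by auto
    fix y assume y: "y \<in> {0..x}"
    then have y1: "y \<in> {0..1}" using x by auto
    have "((\<lambda>y. v y t - bt t y) has_real_derivative vx y t - bx t) (at y within {0..1})"
      by (intro derivative_intros dvx[OF y1 t] db)
    then have "((\<lambda>y. v y t - bt t y) has_real_derivative vx y t - bx t) (at y within {0..x})"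
      by (rule DERIV_subset) (use x in auto)
    then show "((\<lambda>y. v y t - bt t y) has_vector_derivative vx y t - bx t) (at y within {0..x})"
      by (simp add: has_real_derivative_iff_has_vector_derivative)
  qed
  moreover have "v 0 t - bt t 0 = 0" using bd[OF t] unfolding bt_def by simp
  ultimately have "integral {0..x} (\<lambda>y. vx y t - bx t) = v x t - bt t x" by (simp add: integral_unique)
  moreover have "(integral {0..x} (\<lambda>y. vx y t - bx t))^2 \<le> integral {0..1} (\<lambda>y. (vx y t - bx t)^2)"
    by (rule cs_bound) (use x slice0[OF c0(4) t] in \<open>auto intro!: continuous_intros simp: bx_def\<close>)
  ultimately show ?thesis unfolding M_def by simp
qed

definition "e2 x t = (u x t - \<alpha> t)^2 / 2"
definition "E2 t = integral {0..1} (\<lambda>x. e2 x t)"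
definition "P2 x t = (u x t - \<alpha> t) * (ut x t - \<alpha>' t)"
definition "N t = integral {0..1} (\<lambda>x. (ux x t)^2)"
definition "F2 t = E2 t + (1/2) * integral {0..t} N"
definition "Q2 x t = (u x t - \<alpha> t) * (u x t * v x t + ux x t)
   - bt t x * ((u x t - \<alpha> t)^2/2 + \<alpha> t * (u x t - \<alpha> t))"
definition "Qd2 x t = ux x t * (u x t * v x t + ux x t) + (u x t - \<alpha> t) * (ux x t * v x t + u x t * vx x t + uxx x t)
   - bx t * ((u x t - \<alpha> t)^2/2 + \<alpha> t * (u x t - \<alpha> t)) - bt t x * ((u x t - \<alpha> t) * ux x t + \<alpha> t * ux x t)"
definition "K2 = 4 + A + A^2"

lemma K2_pos: "K2 \<ge> 0" unfolding K2_def using A0 by simp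

lemma e2_deriv:
  assumes x: "x \<in> {0..1}" and t: "t \<in> {0<..<T}"
  shows "((\<lambda>s. e2 x s) has_real_derivative P2 x t) (at t)"
  unfolding e2_def P2_def
  by (rule derivative_eq_intros dut[OF x t] d\<alpha> refl | use t in \<open>simp add: field_simps power2_eq_square\<close>)+

lemma cont_P2: "continuous_on S1 (\<lambda>p. P2 (snd p) (fst p))"
  unfolding P2_def by (auto intro!: continuous_intros)
lemma cont_e2: "continuous_on S0 (\<lambda>p. e2 (snd p) (fst p))"
  unfolding e2_def by (auto intro!: continuous_intros)
lemma cont_Q2: "continuous_on S1 (\<lambda>p. Q2 (snd p) (fst p))"
  unfolding Q2_def bt_def by (auto intro!: continuous_intros)
lemma cont_Qd2: "continuous_on S1 (\<lambda>p. Qd2 (snd p) (fst p))"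
  unfolding Qd2_def bt_def bx_def by (auto intro!: continuous_intros)
lemma cont_ux2: "continuous_on S0 (\<lambda>p. (ux (snd p) (fst p))^2)"
  by (auto intro!: continuous_intros)

lemma E2_deriv: "t \<in> {0<..<T} \<Longrightarrow> (E2 has_real_derivative integral {0..1} (\<lambda>x. P2 x t)) (at t)"
  unfolding E2_def by (rule leib[OF e2_deriv cont_e2 cont_P2])

lemma Q2_deriv:
  assumes x: "x \<in> {0<..<1}" and t: "t \<in> {0<..<T}"
  shows "((\<lambda>y. Q2 y t) has_real_derivative Qd2 x t) (at x)"
proof -
  have db: "((\<lambda>y. bt t y) has_real_derivative bx t) (at x)" unfolding bt_def bx_def
    by (rule derivative_eq_intros refl | simp)+
  show ?thesis unfolding Q2_def Qd2_def
    by (rule derivative_eq_intros dxi[OF x t] db refl | simp add: field_simps power2_eq_square)+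
qed

lemma Qd2_int: assumes t: "t \<in> {0<..<T}" shows "integral {0..1} (\<lambda>x. Qd2 x t) = 0"
proof -
  have "((\<lambda>x. Qd2 x t) has_integral (Q2 1 t - Q2 0 t)) {0..1}"
  proof (rule fundamental_theorem_of_calculus_interior)
    show "continuous_on {0..1} (\<lambda>x. Q2 x t)" using slice1[OF cont_Q2 t] by simp
    fix x assume "x \<in> {0<..<1::real}"
    then show "((\<lambda>x. Q2 x t) has_vector_derivative Qd2 x t) (at x)"
      using Q2_deriv[OF _ t] by (simp add: has_real_derivative_iff_has_vector_derivative)
  qed simp
  moreover have "Q2 1 t = 0" "Q2 0 t = 0" using bd[of t] t unfolding Q2_def by auto
  ultimately show ?thesis by (simp add: integral_unique)
qed

lemma P2_le:
  assumes x: "x \<in> {0<..<1}" and t: "t \<in> {0<..<T}"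
  shows "P2 x t \<le> Qd2 x t - (1/2) * (ux x t)^2 + K2 * (M t + g t) * (e2 x t + 1)"
proof -
  have x': "x \<in> {0..1}" and t': "t \<in> {0..<T}" using x t by auto
  define Rr where "Rr = - ((ux x t)^2) - ux x t * u x t * (v x t - bt t x)
     + bx t * ((u x t - \<alpha> t)^2/2 + \<alpha> t * (u x t - \<alpha> t)) - \<alpha>' t * (u x t - \<alpha> t)"
  have eq: "P2 x t = Qd2 x t + Rr"
  proof -
    have p1: "ut x t = uxx x t + (ux x t * v x t + u x t * vx x t)" using pde1[OF x t] by simp
    show ?thesis unfolding Rr_def P2_def Qd2_def p1 bt_def bx_def
      by (simp add: algebra_simps power2_eq_square)
  qed
  have "Rr \<le> -(1/2)*(ux x t)^2 + (4 + A + A^2) * (M t + g t) * ((u x t - \<alpha> t)^2/2 + 1)"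
    unfolding Rr_def
    by (rule R2_bound) (use t apos'[of t] aup[of t] V_sup[OF x' t'] bx_bound a'_bound A0 in auto)
  then have "Rr \<le> -(1/2)*(ux x t)^2 + K2 * (M t + g t) * (e2 x t + 1)" by (simp only: e2_def K2_def)
  then show ?thesis unfolding eq by linarith
qed

lemma E2_dbound: assumes t: "t \<in> {0<..<T}"
  shows "integral {0..1} (\<lambda>x. P2 x t) \<le> - (1/2) * N t + K2 * (M t + g t) * (E2 t + 1)"
proof -
  have t0: "t \<in> {0..<T}" using t by auto
  have iQ: "(\<lambda>x. Qd2 x t) integrable_on {0..1}" by (rule sl_int1[OF cont_Qd2 t])
  have iV: "(\<lambda>x. (ux x t)^2) integrable_on {0..1}" by (rule sl_int0[OF cont_ux2 t0])
  have ie: "(\<lambda>x. e2 x t) integrable_on {0..1}" by (rule sl_int0[OF cont_e2 t0])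
  have "integral {0..1} (\<lambda>x. P2 x t) \<le> integral {0..1} (\<lambda>x. Qd2 x t - (1/2) * (ux x t)^2 + K2 * (M t + g t) * (e2 x t + 1))"
  proof (rule int_le_open)
    show "(\<lambda>x. P2 x t) integrable_on {0..1}" by (rule sl_int1[OF cont_P2 t])
    show "(\<lambda>x. Qd2 x t - (1/2) * (ux x t)^2 + K2 * (M t + g t) * (e2 x t + 1)) integrable_on {0..1}"
      using iQ iV ie by (intro integrable_add integrable_diff integrable_on_mult_right) auto
  qed (use P2_le t in auto)
  also have "\<dots> = - (1/2) * N t + K2 * (M t + g t) * (E2 t + 1)"
    unfolding int_combo[OF iQ iV ie] Qd2_int[OF t] N_def E2_def by simp
  finally show ?thesis .
qed

lemma N_cont: "continuous_on {0..<T} N"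
  unfolding N_def by (rule param_cont[OF cont_ux2])
lemma E2_cont: "continuous_on {0..<T} E2"
  unfolding E2_def by (rule param_cont[OF cont_e2])
lemma N_nonneg: "t \<in> {0..<T} \<Longrightarrow> N t \<ge> 0"
  unfolding N_def by (rule integral_nonneg[OF sl_int0[OF cont_ux2]]) auto
lemma E2_nonneg: "t \<in> {0..<T} \<Longrightarrow> E2 t \<ge> 0"
  unfolding E2_def by (rule integral_nonneg[OF sl_int0[OF cont_e2]]) (auto simp: e2_def)
lemma intN_nonneg: "b \<in> {0..<T} \<Longrightarrow> integral {0..b} N \<ge> 0"
  by (rule integral_nonneg) (auto intro!: integrable_continuous_interval continuous_on_subset[OF N_cont] N_nonneg)

definition "Mb = (E1 0 + 1) * exp (K1 * Lg) / \<epsilon>"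

lemma intM_bound: assumes b: "b \<in> {0..<T}" shows "integral {0..b} M \<le> Mb"
proof -
  have "\<epsilon> * integral {0..b} M \<le> F1 b" unfolding F1_def using E1_nonneg[OF b] by simp
  also have "\<dots> \<le> (E1 0 + 1) * exp (K1 * Lg)" using lemma1[OF b] by simp
  finally show ?thesis unfolding Mb_def using eps by (simp add: field_simps)
qed

lemma lemma2:
  assumes b: "b \<in> {0..<T}"
  shows "F2 b + 1 \<le> (E2 0 + 1) * exp (K2 * (Mb + Lg))"
proof -
  have cM: "continuous_on {0..b} M" using b by (intro continuous_on_subset[OF M_cont]) auto
  have cN: "continuous_on {0..b} N" using b by (intro continuous_on_subset[OF N_cont]) auto
  have cE: "continuous_on {0..b} E2" using b by (intro continuous_on_subset[OF E2_cont]) auto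
  have cg: "continuous_on {0..b} g" using b by (intro continuous_on_subset[OF g_cont]) auto
  have cF: "continuous_on {0..b} F2" unfolding F2_def
    by (intro continuous_intros cE indefinite_integral_continuous_1 integrable_continuous_interval cN)
  have ch: "continuous_on {0..b} (\<lambda>t. K2 * (M t + g t))" by (intro continuous_intros cM cg)
  have "F2 b + 1 \<le> (F2 0 + 1) * exp (integral {0..b} (\<lambda>t. K2 * (M t + g t)))"
  proof (rule gronwall[OF _ cF ch])
    show "0 \<le> b" using b by auto
    fix t assume t: "0 < t" "t < b"
    have tT: "t \<in> {0<..<T}" using t b by auto
    have dI: "((\<lambda>s. integral {0..s} N) has_real_derivative N t) (at t)"
    proof -
      have "((\<lambda>s. integral {0..s} N) has_real_derivative N t) (at t within {0..b})"
        by (rule integral_has_real_derivative[OF cN]) (use t in auto)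
      moreover have "at t within {0..b} = at t" by (rule at_within_interior) (use t in auto)
      ultimately show ?thesis by simp
    qed
    have dF: "(F2 has_real_derivative (integral {0..1} (\<lambda>x. P2 x t) + (1/2) * N t)) (at t)"
    proof -
      have "F2 = (\<lambda>s. E2 s + (1/2) * integral {0..s} N)" by (rule ext) (simp add: F2_def)
      moreover have "((\<lambda>s. (1/2) * integral {0..s} N) has_real_derivative (1/2) * N t) (at t)"
        by (rule DERIV_cmult[OF dI])
      ultimately show ?thesis using DERIV_add[OF E2_deriv[OF tT]] by simp
    qed
    have "integral {0..1} (\<lambda>x. P2 x t) + (1/2) * N t \<le> K2 * (M t + g t) * (E2 t + 1)"
      using E2_dbound[OF tT] by simp
    also have "\<dots> \<le> K2 * (M t + g t) * (F2 t + 1)"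
    proof -
      have "E2 t \<le> F2 t" unfolding F2_def using intN_nonneg[of t] tT by simp
      moreover have "K2 * (M t + g t) \<ge> 0" using K2_pos M_nonneg[of t] g0[of t] tT by simp
      ultimately show ?thesis by (intro mult_left_mono) auto
    qed
    finally show "\<exists>d. (F2 has_real_derivative d) (at t) \<and> d \<le> K2 * (M t + g t) * (F2 t + 1)" using dF by blast
  qed
  also have "\<dots> \<le> (E2 0 + 1) * exp (K2 * (Mb + Lg))"
  proof -
    have "F2 0 = E2 0" unfolding F2_def by simp
    moreover have "integral {0..b} (\<lambda>t. K2 * (M t + g t)) \<le> K2 * (Mb + Lg)"
    proof -
      have "integral {0..b} (\<lambda>t. K2 * (M t + g t)) = K2 * (integral {0..b} M + integral {0..b} g)"
        using integral_add[OF integrable_continuous_interval[OF cM] integrable_continuous_interval[OF cg]] by simp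
      also have "\<dots> \<le> K2 * (Mb + Lg)" using intM_bound[OF b] gint[of b] b K2_pos
        by (intro mult_left_mono add_mono) auto
      finally show ?thesis .
    qed
    moreover have "E2 0 + 1 \<ge> 0" using E2_nonneg[of 0] Tpos by simp
    ultimately show ?thesis by (simp add: mult_left_mono)
  qed
  finally show ?thesis .
qed

lemma final:
  assumes b: "b \<in> {0..<T}"
  shows "integral {0..1} (\<lambda>x. (u x b - \<alpha> b)^2) + integral {0..1} (\<lambda>x. (v x b - ((\<beta>2 b - \<beta>1 b) * x + \<beta>1 b))^2)
     + integral {0..b} N \<le> 2 * ((E2 0 + 1) * exp (K2 * (Mb + Lg))) + 2 * ((E1 0 + 1) * exp (K1 * Lg))"
proof -
  have e2: "E2 b = integral {0..1} (\<lambda>x. (u x b - \<alpha> b)^2) / 2" unfolding E2_def e2_def by simp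
  have f2: "F2 b = E2 b + (1/2) * integral {0..b} N" unfolding F2_def ..
  have "integral {0..1} (\<lambda>x. (v x b - bt b x)^2 / 2) \<le> E1 b"
    unfolding E1_def
  proof (rule integral_le)
    show "(\<lambda>x. (v x b - bt b x)^2 / 2) integrable_on {0..1}"
      by (rule sl_int0[OF _ b, of "\<lambda>x t. (v x t - bt t x)^2 / 2"]) (auto intro!: continuous_intros simp: bt_def)
    show "(\<lambda>x. e1 x b) integrable_on {0..1}" by (rule sl_int0[OF cont_e1 b])
    fix x assume "x \<in> {0..1::real}"
    then show "(v x b - bt b x)^2 / 2 \<le> e1 x b" unfolding e1_def using U_bound(2)[of x b] b by simp
  qed
  then have v: "integral {0..1} (\<lambda>x. (v x b - bt b x)^2) / 2 \<le> E1 b" by simp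
  have "E1 b \<le> F1 b" unfolding F1_def using intM_nonneg[OF b] eps by simp
  with v lemma1[OF b] lemma2[OF b] e2 f2 show ?thesis unfolding bt_def by linarith
qed

end

lemma smooth_facts:
  assumes sm: "smooth_derivs {0..} f D"
  shows "\<And>t. t \<ge> 0 \<Longrightarrow> (f has_real_derivative D 1 t) (at t within {0..})"
    "\<And>t. t > 0 \<Longrightarrow> (f has_real_derivative D 1 t) (at t)"
    "continuous_on {0..} f" "continuous_on {0..} (D 1)"
proof -
  have D0: "\<And>t. t \<ge> 0 \<Longrightarrow> D 0 t = f t" and Dd: "\<And>k t. t \<ge> 0 \<Longrightarrow> (D k has_real_derivative D (Suc k) t) (at t within {0..})"
    using sm unfolding smooth_derivs_def by auto
  show d: "\<And>t. t \<ge> 0 \<Longrightarrow> (f has_real_derivative D 1 t) (at t within {0..})"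
  proof -
    fix t :: real assume t: "t \<ge> 0"
    have "(D 0 has_real_derivative D 1 t) (at t within {0..})" using Dd[of t 0] t by simp
    then show "(f has_real_derivative D 1 t) (at t within {0..})"
      by (rule has_field_derivative_transform_within[OF _ zero_less_one]) (use t D0 in auto)
  qed
  show "\<And>t. t > 0 \<Longrightarrow> (f has_real_derivative D 1 t) (at t)"
  proof -
    fix t :: real assume t: "t > 0"
    have "(f has_real_derivative D 1 t) (at t within {0<..})" by (rule DERIV_subset[OF d]) (use t in auto)
    moreover have "at t within {0<..} = at t" by (rule at_within_open) (use t in auto)
    ultimately show "(f has_real_derivative D 1 t) (at t)" by simp
  qed
  show "continuous_on {0..} f" by (rule DERIV_continuous_on[OF d]) auto
  show "continuous_on {0..} (D 1)" by (rule DERIV_continuous_on[of _ _ "D 2"]) (use Dd[of _ 1] in \<open>auto simp: numeral_2_eq_2\<close>)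
qed

lemma ftc_bound:
  assumes d: "\<And>t. t \<ge> 0 \<Longrightarrow> (f has_real_derivative f' t) (at t within {0..})"
    and cf': "continuous_on {0..} f'" and si: "set_integrable lborel {0..} f'" and t: "t \<ge> 0"
  shows "\<bar>f t\<bar> \<le> \<bar>f 0\<bar> + (LINT s:{0..}|lborel. \<bar>f' s\<bar>)"
proof -
  have "(f' has_integral (f t - f 0)) {0..t}"
  proof (rule fundamental_theorem_of_calculus)
    show "0 \<le> t" by (rule t)
    fix x assume x: "x \<in> {0..t}"
    have "(f has_real_derivative f' x) (at x within {0..t})" by (rule DERIV_subset[OF d]) (use x in auto)
    then show "(f has_vector_derivative f' x) (at x within {0..t})"
      by (simp add: has_real_derivative_iff_has_vector_derivative)
  qed
  then have e: "f t - f 0 = integral {0..t} f'" and i: "f' integrable_on {0..t}" by (auto simp: integral_unique)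
  have ia: "(\<lambda>s. \<bar>f' s\<bar>) integrable_on {0..t}"
    by (rule integrable_continuous_interval) (use t in \<open>auto intro!: continuous_intros continuous_on_subset[OF cf']\<close>)
  have "integral {0..t} f' \<le> integral {0..t} (\<lambda>s. \<bar>f' s\<bar>)" by (rule integral_le[OF i ia]) auto
  moreover have "- integral {0..t} f' \<le> integral {0..t} (\<lambda>s. \<bar>f' s\<bar>)"
  proof -
    have "integral {0..t} (\<lambda>s. - f' s) \<le> integral {0..t} (\<lambda>s. \<bar>f' s\<bar>)"
      by (rule integral_le[OF integrable_neg[OF i] ia]) auto
    then show ?thesis by simp
  qed
  moreover have "integral {0..t} (\<lambda>s. \<bar>f' s\<bar>) \<le> (LINT s:{0..}|lborel. \<bar>f' s\<bar>)"
    by (rule L1_bound[OF cf' si t])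
  ultimately show ?thesis using e by linarith
qed

theorem lemma2:
  fixes \<epsilon> :: real and u0 v0 \<alpha> \<beta>1 \<beta>2 :: "real \<Rightarrow> real"
    and D\<alpha> D\<beta>1 D\<beta>2 :: "nat \<Rightarrow> real \<Rightarrow> real"
  assumes eps: "\<epsilon> > 0"
    and u0_pos: "\<forall>x\<in>{0..1}. u0 x > 0"
    and H2: "H2_01 u0" "H2_01 v0"
    and compat: "u0 0 = \<alpha> 0" "u0 1 = \<alpha> 0" "v0 0 = \<beta>1 0" "v0 1 = \<beta>2 0"
    and smooth: "smooth_derivs {0..} \<alpha> D\<alpha>" "smooth_derivs {0..} \<beta>1 D\<beta>1"
                "smooth_derivs {0..} \<beta>2 D\<beta>2"
    and alpha_low: "\<exists>a>0. \<forall>t\<ge>0. \<alpha> t \<ge> a"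
    and alpha_W11: "set_integrable lborel {0..} (D\<alpha> 1)" "set_integrable lborel {0..} (D\<alpha> 2)"
    and beta_L1: "set_integrable lborel {0..} (\<lambda>t. \<beta>1 t - \<beta>2 t)"
    and beta1_W11: "set_integrable lborel {0..} (D\<beta>1 1)" "set_integrable lborel {0..} (D\<beta>1 2)"
    and beta2_W11: "set_integrable lborel {0..} (D\<beta>2 1)" "set_integrable lborel {0..} (D\<beta>2 2)"
  shows "\<exists>C>0. \<forall>T>0. \<forall>u v ux.
           classical_sol \<epsilon> u0 v0 \<alpha> \<beta>1 \<beta>2 T u v \<longrightarrow>
           (\<forall>x\<in>{0..1}. \<forall>t\<in>{0..<T}. u x t > 0) \<longrightarrow>
           (\<forall>x\<in>{0..1}. \<forall>t\<in>{0..<T}. ((\<lambda>y. u y t) has_real_derivative ux x t) (at x within {0..1})) \<longrightarrow>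
           (\<forall>t\<in>{0..<T}.
              integral {0..1} (\<lambda>x. (u x t - \<alpha> t)^2)
            + integral {0..1} (\<lambda>x. (v x t - ((\<beta>2 t - \<beta>1 t) * x + \<beta>1 t))^2)
            + integral {0..t} (\<lambda>\<tau>. integral {0..1} (\<lambda>x. (ux x \<tau>)^2)) \<le> C)"
proof -
  note s\<alpha> = smooth_facts[OF smooth(1)] and s\<beta>1 = smooth_facts[OF smooth(2)] and s\<beta>2 = smooth_facts[OF smooth(3)]
  obtain a where a: "a > 0" "\<And>t. t \<ge> 0 \<Longrightarrow> a \<le> \<alpha> t" using alpha_low by auto
  define L\<alpha> where "L\<alpha> = (LINT s:{0..}|lborel. \<bar>D\<alpha> 1 s\<bar>)"
  define L\<beta> where "L\<beta> = (LINT s:{0..}|lborel. \<bar>\<beta>1 s - \<beta>2 s\<bar>)"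
  define L\<beta>1 where "L\<beta>1 = (LINT s:{0..}|lborel. \<bar>D\<beta>1 1 s\<bar>)"
  define L\<beta>2 where "L\<beta>2 = (LINT s:{0..}|lborel. \<bar>D\<beta>2 1 s\<bar>)"
  define A where "A = \<bar>\<alpha> 0\<bar> + L\<alpha>"
  define B where "B = max (\<bar>\<beta>1 0\<bar> + L\<beta>1) (\<bar>\<beta>2 0\<bar> + L\<beta>2)"
  have aup: "\<And>t. t \<ge> 0 \<Longrightarrow> \<alpha> t \<le> A"
    using ftc_bound[OF s\<alpha>(1) s\<alpha>(4) alpha_W11(1)] unfolding A_def L\<alpha>_def by fastforce
  have b1b: "\<And>t. t \<ge> 0 \<Longrightarrow> \<bar>\<beta>1 t\<bar> \<le> B"
    using ftc_bound[OF s\<beta>1(1) s\<beta>1(4) beta1_W11(1)] unfolding B_def L\<beta>1_def by fastforce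
  have b2b: "\<And>t. t \<ge> 0 \<Longrightarrow> \<bar>\<beta>2 t\<bar> \<le> B"
    using ftc_bound[OF s\<beta>2(1) s\<beta>2(4) beta2_W11(1)] unfolding B_def L\<beta>2_def by fastforce
  define g where "g t = \<bar>D\<alpha> 1 t\<bar> + \<bar>\<beta>1 t - \<beta>2 t\<bar> + \<bar>D\<beta>1 1 t\<bar> + \<bar>D\<beta>2 1 t\<bar>" for t
  define Lg where "Lg = L\<alpha> + L\<beta> + L\<beta>1 + L\<beta>2"
  have cbb: "continuous_on {0..} (\<lambda>t. \<beta>1 t - \<beta>2 t)" by (intro continuous_intros s\<beta>1(3) s\<beta>2(3))
  have gint: "\<And>t. t \<ge> 0 \<Longrightarrow> integral {0..t} g \<le> Lg"
  proof -
    fix t :: real assume t: "t \<ge> 0"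
    have c1: "continuous_on {0..t} (\<lambda>s. \<bar>D\<alpha> 1 s\<bar>)" using t by (intro continuous_intros continuous_on_subset[OF s\<alpha>(4)]) auto
    have c2: "continuous_on {0..t} (\<lambda>s. \<bar>\<beta>1 s - \<beta>2 s\<bar>)" using t by (intro continuous_intros continuous_on_subset[OF cbb]) auto
    have c3: "continuous_on {0..t} (\<lambda>s. \<bar>D\<beta>1 1 s\<bar>)" using t by (intro continuous_intros continuous_on_subset[OF s\<beta>1(4)]) auto
    have c4: "continuous_on {0..t} (\<lambda>s. \<bar>D\<beta>2 1 s\<bar>)" using t by (intro continuous_intros continuous_on_subset[OF s\<beta>2(4)]) auto
    note i = integrable_continuous_interval[OF c1] integrable_continuous_interval[OF c2]
      integrable_continuous_interval[OF c3] integrable_continuous_interval[OF c4]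
    have "integral {0..t} g = integral {0..t} (\<lambda>s. \<bar>D\<alpha> 1 s\<bar>) + integral {0..t} (\<lambda>s. \<bar>\<beta>1 s - \<beta>2 s\<bar>)
        + integral {0..t} (\<lambda>s. \<bar>D\<beta>1 1 s\<bar>) + integral {0..t} (\<lambda>s. \<bar>D\<beta>2 1 s\<bar>)"
      unfolding g_def using i by (simp add: integral_add integrable_add)
    also have "\<dots> \<le> Lg" unfolding Lg_def L\<alpha>_def L\<beta>_def L\<beta>1_def L\<beta>2_def
      by (intro add_mono L1_bound s\<alpha>(4) s\<beta>1(4) s\<beta>2(4) cbb alpha_W11(1) beta1_W11(1) beta2_W11(1) beta_L1 t)
    finally show "integral {0..t} g \<le> Lg" .
  qed
  define E1i where "E1i = integral {0..1} (\<lambda>x. (u0 x * ln (u0 x / \<alpha> 0) - u0 x + \<alpha> 0) + (v0 x - ((\<beta>2 0 - \<beta>1 0) * x + \<beta>1 0))^2 / 2)"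
  define E2i where "E2i = integral {0..1} (\<lambda>x. (u0 x - \<alpha> 0)^2 / 2)"
  define c1 where "c1 = 1 + 10 * A"
  define K1 where "K1 = c1/a + c1 + 2*\<epsilon> + 2*\<epsilon>*B + 1"
  define K2 where "K2 = 4 + A + A^2"
  define Mb where "Mb = (E1i + 1) * exp (K1 * Lg) / \<epsilon>"
  define C0 where "C0 = 2 * ((E2i + 1) * exp (K2 * (Mb + Lg))) + 2 * ((E1i + 1) * exp (K1 * Lg))"
  show ?thesis
  proof (rule exI[of _ "max 1 C0"], intro conjI allI impI ballI)
    show "0 < max 1 C0" by simp
    fix T :: real and u v ux' :: "real \<Rightarrow> real \<Rightarrow> real" and t :: real
    assume T: "T > 0" and cs: "classical_sol \<epsilon> u0 v0 \<alpha> \<beta>1 \<beta>2 T u v"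
      and up: "\<forall>x\<in>{0..1}. \<forall>t\<in>{0..<T}. u x t > 0"
      and dux': "\<forall>x\<in>{0..1}. \<forall>t\<in>{0..<T}. ((\<lambda>y. u y t) has_real_derivative ux' x t) (at x within {0..1})"
      and t: "t \<in> {0..<T}"
    obtain ux vx uxx vxx ut vt where
      c: "continuous_on ({0..1} \<times> {0..<T}) (\<lambda>(x,t). u x t)"
     "continuous_on ({0..1} \<times> {0..<T}) (\<lambda>(x,t). v x t)"
     "continuous_on ({0..1} \<times> {0..<T}) (\<lambda>(x,t). ux x t)"
     "continuous_on ({0..1} \<times> {0..<T}) (\<lambda>(x,t). vx x t)"
     "continuous_on ({0..1} \<times> {0<..<T}) (\<lambda>(x,t). uxx x t)"
     "continuous_on ({0..1} \<times> {0<..<T}) (\<lambda>(x,t). vxx x t)"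
     "continuous_on ({0..1} \<times> {0<..<T}) (\<lambda>(x,t). ut x t)"
     "continuous_on ({0..1} \<times> {0<..<T}) (\<lambda>(x,t). vt x t)"
     and d1: "\<forall>x\<in>{0..1}. \<forall>t\<in>{0..<T}.
        ((\<lambda>y. u y t) has_real_derivative ux x t) (at x within {0..1}) \<and>
        ((\<lambda>y. v y t) has_real_derivative vx x t) (at x within {0..1})"
     and d2: "\<forall>x\<in>{0..1}. \<forall>t\<in>{0<..<T}.
        ((\<lambda>y. ux y t) has_real_derivative uxx x t) (at x within {0..1}) \<and>
        ((\<lambda>y. vx y t) has_real_derivative vxx x t) (at x within {0..1}) \<and>
        ((\<lambda>s. u x s) has_real_derivative ut x t) (at t) \<and>
        ((\<lambda>s. v x s) has_real_derivative vt x t) (at t)"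
     and pde: "\<forall>x\<in>{0<..<1}. \<forall>t\<in>{0<..<T}.
        ut x t - (ux x t * v x t + u x t * vx x t) = uxx x t \<and>
        vt x t - ux x t = \<epsilon> * vxx x t + \<epsilon> * (2 * v x t * vx x t)"
     and ini: "\<forall>x\<in>{0..1}. u x 0 = u0 x \<and> v x 0 = v0 x"
     and bdy: "\<forall>t\<in>{0..<T}. u 0 t = \<alpha> t \<and> u 1 t = \<alpha> t \<and> v 0 t = \<beta>1 t \<and> v 1 t = \<beta>2 t"
      using cs unfolding classical_sol_def by blast
    interpret S: sol \<epsilon> T u v ux vx uxx vxx ut vt \<alpha> \<beta>1 \<beta>2 "D\<alpha> 1" "D\<beta>1 1" "D\<beta>2 1" g a A B Lg
    proof
      show "\<epsilon> > 0" by (rule eps)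
    qed (use T c d1 d2 pde bdy up s\<alpha> s\<beta>1 s\<beta>2 a aup b1b b2b gint in \<open>auto simp: g_def\<close>)
    have fin: "integral {0..1} (\<lambda>x. (u x t - \<alpha> t)^2) + integral {0..1} (\<lambda>x. (v x t - ((\<beta>2 t - \<beta>1 t) * x + \<beta>1 t))^2)
       + integral {0..t} S.N \<le> 2 * ((S.E2 0 + 1) * exp (S.K2 * (S.Mb + Lg))) + 2 * ((S.E1 0 + 1) * exp (S.K1 * Lg))"
      by (rule S.final[OF t])
    have "S.E1 0 = E1i" unfolding S.E1_def E1i_def S.e1_def S.Phi_def S.bt_def
      by (rule integral_cong) (use ini in auto)
    moreover have "S.E2 0 = E2i" unfolding S.E2_def E2i_def S.e2_def
      by (rule integral_cong) (use ini in auto)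
    ultimately have cst: "2 * ((S.E2 0 + 1) * exp (S.K2 * (S.Mb + Lg))) + 2 * ((S.E1 0 + 1) * exp (S.K1 * Lg)) = C0"
      unfolding C0_def S.K2_def K2_def S.Mb_def Mb_def S.K1_def K1_def S.c1_def c1_def by simp
    have "integral {0..t} S.N = integral {0..t} (\<lambda>\<tau>. integral {0..1} (\<lambda>x. (ux' x \<tau>)^2))"
    proof (rule integral_cong)
      fix \<tau> assume \<tau>: "\<tau> \<in> {0..t}"
      then have \<tau>T: "\<tau> \<in> {0..<T}" using t by auto
      show "S.N \<tau> = integral {0..1} (\<lambda>x. (ux' x \<tau>)^2)" unfolding S.N_def
      proof (rule integral_cong)
        fix x :: real assume x: "x \<in> {0..1}"
        have h1: "((\<lambda>y. u y \<tau>) has_vector_derivative ux' x \<tau>) (at x within cbox 0 1)"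
          using dux' x \<tau>T by (simp add: has_real_derivative_iff_has_vector_derivative cbox_interval)
        have h2: "((\<lambda>y. u y \<tau>) has_vector_derivative ux x \<tau>) (at x within cbox 0 1)"
          using d1 x \<tau>T by (simp add: has_real_derivative_iff_has_vector_derivative cbox_interval)
        have "ux' x \<tau> = ux x \<tau>"
          by (rule vector_derivative_unique_within_closed_interval[OF _ _ h1 h2]) (use x in \<open>auto simp: cbox_interval\<close>)
        then show "(ux x \<tau>)^2 = (ux' x \<tau>)^2" by simp
      qed
    qed
    with fin cst show "integral {0..1} (\<lambda>x. (u x t - \<alpha> t)^2)
            + integral {0..1} (\<lambda>x. (v x t - ((\<beta>2 t - \<beta>1 t) * x + \<beta>1 t))^2)
            + integral {0..t} (\<lambda>\<tau>. integral {0..1} (\<lambda>x. (ux' x \<tau>)^2)) \<le> max 1 C0" by linarith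
  qed
qed

end
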